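(* For every integer $n\ge0$ and every $x>0$, $$\frac{2n}{x}+\frac{i_{n+1}(x)}{i_n(x)}-\frac{k_{n+1}(x)}{k_n(x)}<0 .$$
   Context: $i_n(x)=\sqrt{\frac{\pi}{2x}}\,I_{n+1/2}(x)$ and $k_n(x)=\sqrt{\frac{2}{\pi x}}\,K_{n+1/2}(x)$ are the modified spherical Bessel functions of the first and second kind, where $I_\nu$ and $K_\nu$ are the modified Bessel functions of the first and second kind. *)

theory Defs
  imports "HOL-Analysis.Analysis"
begin

text \<open>Modified Bessel function of the first kind (power series, DLMF 10.25.2),
  written with the reciprocal Gamma function so that it is defined for every real order.\<close>
definition bessel_I :: "real \<Rightarrow> real \<Rightarrow> real" where
  "bessel_I \<nu> x = (\<Sum>m. (x / 2) powr (2 * real m + \<nu>) * rGamma (real m + \<nu> + 1) / fact m)"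

text \<open>Modified Bessel function of the second kind for non-integer order (DLMF 10.27.4);
  only half-integer orders are used below.\<close>
definition bessel_K :: "real \<Rightarrow> real \<Rightarrow> real" where
  "bessel_K \<nu> x = pi / 2 * (bessel_I (- \<nu>) x - bessel_I \<nu> x) / sin (\<nu> * pi)"

definition sph_i :: "nat \<Rightarrow> real \<Rightarrow> real" where
  "sph_i n x = sqrt (pi / (2 * x)) * bessel_I (real n + 1/2) x"

definition sph_k :: "nat \<Rightarrow> real \<Rightarrow> real" where
  "sph_k n x = sqrt (2 / (pi * x)) * bessel_K (real n + 1/2) x"

end

theory Submission
  imports Defs
begin


definition tm :: "real \<Rightarrow> real \<Rightarrow> nat \<Rightarrow> real" where
  "tm \<nu> x m = (x / 2) powr (2 * real m + \<nu>) * rGamma (real m + \<nu> + 1) / fact m"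

lemma bessel_I_tm: "bessel_I \<nu> x = suminf (tm \<nu> x)"
  unfolding bessel_I_def tm_def by simp

lemma tm_Suc:
  assumes x: "x > 0" and nz: "real m + \<nu> + 1 \<noteq> 0"
  shows "tm \<nu> x (Suc m) = tm \<nu> x m * ((x/2)^2 / ((real m + \<nu> + 1) * (real m + 1)))"
proof -
  have p: "(x/2) powr (2 * real (Suc m) + \<nu>) = (x/2) powr (2 * real m + \<nu>) * (x/2)^2"
  proof -
    have "(x/2) powr (2 * real (Suc m) + \<nu>) = (x/2) powr (2 * real m + \<nu> + 2)"
      by (simp add: algebra_simps)
    also have "\<dots> = (x/2) powr (2 * real m + \<nu>) * (x/2) powr 2"
      by (rule powr_add)
    also have "(x/2) powr 2 = (x/2)^2" using x by (simp add: powr_numeral)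
    finally show ?thesis .
  qed
  have g: "rGamma (real (Suc m) + \<nu> + 1) = rGamma (real m + \<nu> + 1) / (real m + \<nu> + 1)"
    using rGamma_plus1[of "real m + \<nu> + 1"] nz
    by (simp add: field_simps add_ac)
  show ?thesis unfolding tm_def p g
    using nz by (simp add: field_simps)
qed

lemma tm_summable:
  assumes x: "x > 0"
  shows "summable (tm \<nu> x)"
proof (rule summable_ratio_test[where c="1/2" and N="nat (ceiling (x^2 + \<bar>\<nu>\<bar>))"])
  fix m assume m: "m \<ge> nat (ceiling (x^2 + \<bar>\<nu>\<bar>))"
  hence m': "real m \<ge> x^2 + \<bar>\<nu>\<bar>" by linarith
  have pos: "real m + \<nu> + 1 \<ge> x^2 + 1" using m' by linarith
  have x2: "x^2 \<ge> 0" by simp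
  have pos1: "real m + \<nu> + 1 \<ge> 1" using pos x2 by linarith
  hence nz: "real m + \<nu> + 1 \<noteq> 0" by linarith
  have q: "(x/2)^2 / ((real m + \<nu> + 1) * (real m + 1)) \<le> 1/2"
  proof -
    have h0: "(real m + \<nu> + 1) * (real m + 1) \<ge> (x^2+1) * 1"
      by (rule mult_mono[OF pos]) (use pos1 x2 in auto)
    define P where "P = (real m + \<nu> + 1) * (real m + 1)"
    have h: "P \<ge> x^2 + 1" using h0 unfolding P_def by simp
    have "(x/2)^2 / P \<le> 1/2" using h x2 by (simp add: power_divide divide_simps; linarith)
    thus ?thesis unfolding P_def .
  qed
  have q0: "(x/2)^2 / ((real m + \<nu> + 1) * (real m + 1)) \<ge> 0"
  proof -
    have "real m + \<nu> + 1 \<ge> 0" using pos1 by linarith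
    thus ?thesis by (intro divide_nonneg_nonneg mult_nonneg_nonneg) auto
  qed
  define c where "c = (x/2)^2 / ((real m + \<nu> + 1) * (real m + 1))"
  have "norm (tm \<nu> x (Suc m)) = norm (tm \<nu> x m) * c"
  proof -
    have c0: "c \<ge> 0" using q0 c_def by simp
    have e: "tm \<nu> x (Suc m) = tm \<nu> x m * c" using tm_Suc[OF x nz] c_def by simp
    show ?thesis by (simp add: e abs_mult c0)
  qed
  also have "\<dots> \<le> norm (tm \<nu> x m) * (1/2)"
    by (rule mult_left_mono) (use q c_def in auto)
  finally show "norm (tm \<nu> x (Suc m)) \<le> 1/2 * norm (tm \<nu> x m)" by simp
qed simp

lemma tm_rec0:
  assumes x: "x > 0"
  shows "tm (\<nu> - 1) x 0 = 2 * \<nu> / x * tm \<nu> x 0"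
proof -
  have p: "(x/2) powr \<nu> = (x/2) powr (\<nu> - 1) * (x/2)"
  proof -
    have "(x/2) powr \<nu> = (x/2) powr ((\<nu> - 1) + 1)" by simp
    also have "\<dots> = (x/2) powr (\<nu> - 1) * (x/2) powr 1" by (rule powr_add)
    finally show ?thesis using x by simp
  qed
  have g: "rGamma \<nu> = \<nu> * rGamma (\<nu> + 1)" using rGamma_plus1[of \<nu>] by simp
  show ?thesis unfolding tm_def using x by (simp add: p g field_simps)
qed

lemma alg_aux:
  fixes D F K P G x \<nu> :: real
  assumes "D = (K + 1) * F" "F \<noteq> 0" "K + 1 \<noteq> 0" "x \<noteq> 0"
  shows "P * ((K + \<nu> + 1) * G) / D = 2 * \<nu> / x * (P * (x/2) * G / D) + P * G / F"
proof -
  have D: "D \<noteq> 0" using assms by simp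
  have "P * G / F = P * G * (K + 1) / D" using assms by simp
  thus ?thesis using D assms(4) by (simp add: field_simps)
qed

lemma tm_recS:
  assumes x: "x > 0"
  shows "tm (\<nu> - 1) x (Suc k) = 2 * \<nu> / x * tm \<nu> x (Suc k) + tm (\<nu> + 1) x k"
proof -
  define P where "P = (x/2) powr (2 * real k + \<nu> + 1)"
  define G where "G = rGamma (real k + \<nu> + 2)"
  have p1: "(x/2) powr (2 * real (Suc k) + (\<nu> - 1)) = P"
    unfolding P_def by (simp add: algebra_simps)
  have p2: "(x/2) powr (2 * real (Suc k) + \<nu>) = P * (x/2)"
  proof -
    have "(x/2) powr (2 * real (Suc k) + \<nu>) = (x/2) powr (2 * real k + \<nu> + 1 + 1)"
      by (simp add: algebra_simps)
    also have "\<dots> = P * (x/2) powr 1" unfolding P_def by (rule powr_add)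
    also have "\<dots> = P * (x/2)" using x by simp
    finally show ?thesis .
  qed
  have p3: "(x/2) powr (2 * real k + (\<nu> + 1)) = P" unfolding P_def by (simp add: algebra_simps)
  have g1: "rGamma (real (Suc k) + (\<nu> - 1) + 1) = (real k + \<nu> + 1) * G"
    unfolding G_def using rGamma_plus1[of "real k + \<nu> + 1"] by (simp add: algebra_simps)
  have g2: "rGamma (real (Suc k) + \<nu> + 1) = G" unfolding G_def by (simp add: algebra_simps)
  have g3: "rGamma (real k + (\<nu> + 1) + 1) = G" unfolding G_def by (simp add: algebra_simps)
  have fs: "(fact (Suc k)::real) = (real k + 1) * fact k" by simp
  have f0: "(fact k :: real) \<noteq> 0" by simp
  have k0: "real k + 1 \<noteq> 0" by linarith
  define F where "F = (fact k :: real)"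
  have F0: "F > 0" unfolding F_def by simp
  have l: "tm (\<nu> - 1) x (Suc k) = P * ((real k + \<nu> + 1) * G) / ((real k + 1) * F)"
    unfolding tm_def p1 g1 fs F_def ..
  have r1: "tm \<nu> x (Suc k) = P * (x/2) * G / ((real k + 1) * F)"
    unfolding tm_def p2 g2 fs F_def ..
  have r2: "tm (\<nu> + 1) x k = P * G / F"
    unfolding tm_def p3 g3 F_def ..
  have alg: "P * ((real k + \<nu> + 1) * G) / ((real k + 1) * F) =
     2 * \<nu> / x * (P * (x/2) * G / ((real k + 1) * F)) + P * G / F"
    by (rule alg_aux) (use x F0 in auto)
  show ?thesis unfolding l r1 r2 alg ..
qed

lemma bessel_I_rec:
  assumes x: "x > 0"
  shows "bessel_I (\<nu> - 1) x = 2 * \<nu> / x * bessel_I \<nu> x + bessel_I (\<nu> + 1) x"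
proof -
  define g where "g m = (case m of 0 \<Rightarrow> 0 | Suc k \<Rightarrow> tm (\<nu> + 1) x k)" for m
  have gs: "g sums bessel_I (\<nu> + 1) x"
  proof -
    have "(\<lambda>n. g (Suc n)) sums bessel_I (\<nu> + 1) x"
      unfolding g_def bessel_I_tm using tm_summable[OF x] by (simp add: summable_sums)
    hence "g sums (bessel_I (\<nu> + 1) x + g 0)" by (simp add: sums_Suc_iff)
    thus ?thesis by (simp add: g_def)
  qed
  have ts: "(\<lambda>m. 2 * \<nu> / x * tm \<nu> x m) sums (2 * \<nu> / x * bessel_I \<nu> x)"
    unfolding bessel_I_tm using tm_summable[OF x] by (intro sums_mult summable_sums)
  have eq: "tm (\<nu> - 1) x = (\<lambda>m. 2 * \<nu> / x * tm \<nu> x m + g m)"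
  proof
    fix m show "tm (\<nu> - 1) x m = 2 * \<nu> / x * tm \<nu> x m + g m"
      by (cases m) (simp_all add: g_def tm_rec0[OF x] tm_recS[OF x])
  qed
  have "tm (\<nu> - 1) x sums (2 * \<nu> / x * bessel_I \<nu> x + bessel_I (\<nu> + 1) x)"
    unfolding eq by (rule sums_add[OF ts gs])
  thus ?thesis unfolding bessel_I_tm by (rule sums_unique[symmetric])
qed

lemma neg_alg: fixes p a b s :: real shows "p * (a - b) / (- s) = p * (b - a) / s"
  by (cases "s = 0") (simp_all add: field_simps)

lemma bessel_K_even: "bessel_K (- \<nu>) x = bessel_K \<nu> x"
proof -
  have "sin (- \<nu> * pi) = - sin (\<nu> * pi)" by simp
  thus ?thesis unfolding bessel_K_def minus_minus using neg_alg by metis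
qed

lemma K_alg:
  fixes A B C D Ip Im p s t :: real
  assumes "B = t * Ip + A" "C = - t * Im + D"
  shows "p * (C - A) / (- s) = p * (D - B) / (- s) + t * (p * (Im - Ip) / s)"
proof (cases "s = 0")
  case True thus ?thesis by simp
next
  case False
  thus ?thesis unfolding assms by (simp add: field_simps)
qed

lemma bessel_K_rec:
  assumes x: "x > 0"
  shows "bessel_K (\<nu> + 1) x = bessel_K (\<nu> - 1) x + 2 * \<nu> / x * bessel_K \<nu> x"
proof -
  define s where "s = sin (\<nu> * pi)"
  have s1: "sin ((\<nu> + 1) * pi) = - s" unfolding s_def
    by (simp add: distrib_right sin_add)
  have s2: "sin ((\<nu> - 1) * pi) = - s" unfolding s_def
    by (simp add: left_diff_distrib sin_diff)
  have a1: "bessel_I (\<nu> - 1) x = 2 * \<nu> / x * bessel_I \<nu> x + bessel_I (\<nu> + 1) x"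
    by (rule bessel_I_rec[OF x])
  have a2: "bessel_I (- (\<nu> + 1)) x = - (2 * \<nu> / x) * bessel_I (- \<nu>) x + bessel_I (- (\<nu> - 1)) x"
  proof -
    have e1: "- \<nu> - 1 = - (\<nu> + 1)" and e2: "- \<nu> + 1 = - (\<nu> - 1)"
      and e3: "2 * (- \<nu>) / x = - (2 * \<nu> / x)" by simp_all
    show ?thesis using bessel_I_rec[OF x, of "- \<nu>"] by (simp only: e1 e2 e3)
  qed
  show ?thesis unfolding bessel_K_def s1 s2 s_def[symmetric]
    by (rule K_alg[OF a1 a2])
qed

lemma rGamma_pos_real: "(z::real) > 0 \<Longrightarrow> rGamma z > 0"
  by (simp add: rGamma_inverse_Gamma)

lemma tm_pos:
  assumes x: "x > 0" and nu: "\<nu> > -1"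
  shows "tm \<nu> x m > 0"
  unfolding tm_def using x nu by (intro divide_pos_pos mult_pos_pos rGamma_pos_real) auto

lemma bessel_I_pos:
  assumes x: "x > 0" and nu: "\<nu> > -1"
  shows "bessel_I \<nu> x > 0"
  unfolding bessel_I_tm by (rule suminf_pos[OF tm_summable[OF x] tm_pos[OF x nu]])

lemma half_alg:
  fixes P x G F K :: real
  assumes "F \<noteq> 0" "2 * K + 1 \<noteq> 0"
  shows "P * (x/2) * G / F = P * ((K + 1/2) * G) / F * (x / (2 * K + 1))"
proof -
  have h: "(K + 1/2) / (2 * K + 1) = 1/2" using assms(2) by (simp add: field_simps)
  have "P * ((K + 1/2) * G) / F * (x / (2 * K + 1)) = P * G / F * x * ((K + 1/2) / (2 * K + 1))"
    using assms by (simp add: field_simps)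
  also have "\<dots> = P * (x/2) * G / F" unfolding h by (simp add: mult_ac)
  finally show ?thesis by simp
qed

lemma tm_half1:
  assumes x: "x > 0"
  shows "tm (1/2) x m = tm (-(1/2)) x m * (x / (2 * real m + 1))"
proof -
  define P where "P = (x/2) powr (2 * real m - 1/2)"
  define G where "G = rGamma (real m + 3/2)"
  have p1: "(x/2) powr (2 * real m + 1/2) = P * (x/2)"
  proof -
    have "(x/2) powr (2 * real m + 1/2) = (x/2) powr ((2 * real m - 1/2) + 1)" by (simp add: add_ac)
    also have "\<dots> = P * (x/2) powr 1" unfolding P_def by (rule powr_add)
    finally show ?thesis using x by simp
  qed
  have p2: "(x/2) powr (2 * real m + - (1/2)) = P" unfolding P_def by simp
  have g1: "rGamma (real m + 1/2 + 1) = G" unfolding G_def by (rule arg_cong[where f=rGamma]) simp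
  have g2: "rGamma (real m + - (1/2) + 1) = (real m + 1/2) * G"
    unfolding G_def using rGamma_plus1[of "real m + 1/2"] by (simp add: add_ac)
  have "tm (1/2) x m = P * (x/2) * G / fact m" unfolding tm_def p1 g1 ..
  moreover have "tm (-(1/2)) x m = P * ((real m + 1/2) * G) / fact m" unfolding tm_def p2 g2 ..
  moreover have "P * (x/2) * G / fact m = P * ((real m + 1/2) * G) / fact m * (x / (2 * real m + 1))"
    by (rule half_alg) (simp, linarith)
  ultimately show ?thesis by simp
qed

lemma tm_half2:
  assumes x: "x > 0"
  shows "tm (-(1/2)) x (Suc m) = tm (1/2) x m * (x / (2 * real m + 2))"
proof -
  define P where "P = (x/2) powr (2 * real m + 1/2)"
  define G where "G = rGamma (real m + 3/2)"
  have p1: "(x/2) powr (2 * real (Suc m) + - (1/2)) = P * (x/2)"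
  proof -
    have "(x/2) powr (2 * real (Suc m) + - (1/2)) = (x/2) powr ((2 * real m + 1/2) + 1)" by simp
    also have "\<dots> = P * (x/2) powr 1" unfolding P_def by (rule powr_add)
    finally show ?thesis using x by simp
  qed
  have g1: "rGamma (real (Suc m) + - (1/2) + 1) = G" unfolding G_def by (simp add: add_ac)
  have g2: "rGamma (real m + 1/2 + 1) = G" unfolding G_def by (rule arg_cong[where f=rGamma]) simp
  have fs: "(fact (Suc m)::real) = (real m + 1) * fact m" by simp
  have "tm (-(1/2)) x (Suc m) = P * (x/2) * G / ((real m + 1) * fact m)" unfolding tm_def p1 g1 fs ..
  moreover have "tm (1/2) x m = P * G / fact m" unfolding tm_def P_def g2 by simp
  moreover have "P * (x/2) * G / ((real m + 1) * fact m) = P * G / fact m * (x / (2 * real m + 2))"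
  proof -
    have "real m + 1 \<noteq> 0" "2 * real m + 2 \<noteq> 0" by linarith+
    thus ?thesis by (simp add: field_simps)
  qed
  ultimately show ?thesis by simp
qed

lemma tm_half_closed:
  assumes x: "x > 0"
  shows "tm (-(1/2)) x m = tm (-(1/2)) x 0 * x^(2*m) / fact (2*m) \<and>
         tm (1/2) x m = tm (-(1/2)) x 0 * x^(2*m+1) / fact (2*m+1)"
proof (induction m)
  case 0
  show ?case using tm_half1[OF x, of 0] by simp
next
  case (Suc m)
  define c where "c = tm (-(1/2)) x 0"
  have h1: "tm (1/2) x m = c * x^(2*m+1) / fact (2*m+1)" using Suc c_def by simp
  have e1: "tm (-(1/2)) x (Suc m) = c * x^(2*Suc m) / fact (2*Suc m)"
  proof -
    have "tm (-(1/2)) x (Suc m) = c * x^(2*m+1) / fact (2*m+1) * (x / (2 * real m + 2))"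
      using tm_half2[OF x, of m] h1 by simp
    also have "\<dots> = c * x^(2*Suc m) / fact (2*Suc m)"
    proof -
      have f: "(fact (2 * Suc m) :: real) = (2 * real m + 2) * fact (2*m+1)"
        by (simp add: algebra_simps)
      have "2 * real m + 2 \<noteq> 0" by linarith
      thus ?thesis unfolding f by (simp add: field_simps power_Suc)
    qed
    finally show ?thesis .
  qed
  have e2: "tm (1/2) x (Suc m) = c * x^(2*Suc m+1) / fact (2*Suc m+1)"
  proof -
    have "tm (1/2) x (Suc m) = c * x^(2*Suc m) / fact (2*Suc m) * (x / (2 * real (Suc m) + 1))"
      using tm_half1[OF x, of "Suc m"] e1 by simp
    also have "\<dots> = c * x^(2*Suc m+1) / fact (2*Suc m+1)"
    proof -
      have f: "(fact (2 * Suc m + 1) :: real) = (2 * real (Suc m) + 1) * fact (2*Suc m)"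
        by (simp add: algebra_simps)
      have "2 * real (Suc m) + 1 \<noteq> 0" by linarith
      thus ?thesis unfolding f by (simp add: field_simps power_Suc)
    qed
    finally show ?thesis .
  qed
  show ?case using e1 e2 c_def by simp
qed

lemma bessel_I_half_diff:
  assumes x: "x > 0"
  shows "bessel_I (-(1/2)) x - bessel_I (1/2) x = tm (-(1/2)) x 0 * exp (-x)"
proof -
  define c where "c = tm (-(1/2)) x 0"
  define f where "f k = c * ((-x)^k / fact k)" for k
  have fs: "f sums (c * exp (-x))"
    unfolding f_def using exp_converges[of "-x"] by (intro sums_mult) (simp add: divide_inverse mult_ac)
  have gs: "(\<lambda>m. sum f {m * 2 ..< m * 2 + 2}) sums (c * exp (-x))"
    by (rule sums_group[OF fs]) simp
  have eq: "(\<lambda>m. sum f {m * 2 ..< m * 2 + 2}) = (\<lambda>m. tm (-(1/2)) x m - tm (1/2) x m)"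
  proof
    fix m
    have "sum f {m * 2 ..< m * 2 + 2} = f (2*m) + f (2*m+1)"
      by (simp add: numeral_2_eq_2 mult.commute)
    also have "\<dots> = tm (-(1/2)) x m - tm (1/2) x m"
      using tm_half_closed[OF x, of m] unfolding f_def c_def by (simp add: power_mult_distrib)
    finally show "sum f {m * 2 ..< m * 2 + 2} = tm (-(1/2)) x m - tm (1/2) x m" .
  qed
  have "(\<lambda>m. tm (-(1/2)) x m - tm (1/2) x m) sums (bessel_I (-(1/2)) x - bessel_I (1/2) x)"
    unfolding bessel_I_tm by (intro sums_diff summable_sums tm_summable[OF x])
  with gs eq show ?thesis unfolding c_def by (metis sums_unique2)
qed

lemma bessel_K_half_pos:
  assumes x: "x > 0"
  shows "bessel_K (1/2) x > 0"
proof -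
  have c: "tm (-(1/2)) x 0 > 0" by (rule tm_pos[OF x]) simp
  have "bessel_K (1/2) x = pi / 2 * (tm (-(1/2)) x 0 * exp (-x))"
    unfolding bessel_K_def bessel_I_half_diff[OF x] by simp
  moreover have "pi / 2 * (tm (-(1/2)) x 0 * exp (-x)) > 0" using c by (intro mult_pos_pos) auto
  ultimately show ?thesis by simp
qed



lemma key_A:
  fixes x n A B :: real
  assumes x: "x > 0" and n: "n \<ge> 0" and A: "A = sqrt (x^2 + n^2)" and B: "B = sqrt (x^2 + (n+2)^2)"
  shows "(A - n - 3) * (n + 3 + B) \<le> A^2 - n^2"
proof -
  have A2: "A^2 = x^2 + n^2" using A by simp
  have B2: "B^2 = x^2 + (n+2)^2" using B by simp
  have A0: "A \<ge> 0" using A by simp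
  have B0: "B \<ge> 0" using B by simp
  have AB: "A \<le> B" unfolding A B by (rule real_sqrt_le_mono) (use n in \<open>simp add: power2_eq_square algebra_simps\<close>)
  have BA: "(B - A) * (B + A) = 4 * n + 4" using A2 B2 by (simp add: algebra_simps power2_eq_square)
  show ?thesis
  proof (cases "A \<le> n + 3")
    case True
    hence "(A - n - 3) * (n + 3 + B) \<le> 0" using n B0 by (intro mult_nonpos_nonneg) auto
    moreover have "A^2 - n^2 \<ge> 0" using A2 by simp
    ultimately show ?thesis by linarith
  next
    case False
    have "(B - A) * (A - n - 3) \<le> (B - A) * (B + A)"
      using False AB n B0 by (intro mult_left_mono) auto
    hence "(B - A) * (A - n - 3) \<le> 6 * n + 9" using BA n by linarith
    thus ?thesis using A2 B2 by (simp add: algebra_simps power2_eq_square)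
  qed
qed

lemma alg_A:
  fixes x n A B w y z :: real
  assumes x: "x > 0" and n: "n \<ge> 0" and A: "A = sqrt (x^2 + n^2)" and B: "B = sqrt (x^2 + (n+2)^2)"
    and w: "w > 0" and y: "y > 0" and wy: "w * (2*n+3+y) = x^2" and yz: "y * (2*n+5+z) = x^2"
    and z: "z \<le> B - n - 2"
  shows "w \<le> A - n"
proof (rule ccontr)
  assume c: "\<not> w \<le> A - n"
  have A2: "A^2 = x^2 + n^2" using A by simp
  have B0: "B \<ge> 0" using B by simp
  have An: "A > n" unfolding A by (rule real_less_rsqrt) (use x in simp)
  have key: "(A - n - 3) * (n + 3 + B) \<le> A^2 - n^2" by (rule key_A[OF x n A B])
  have yb: "y * (n + 3 + B) \<ge> x^2"
  proof -
    have "2*n+5+z \<le> n+3+B" using z by linarith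
    hence "y * (2*n+5+z) \<le> y * (n+3+B)" using y by (intro mult_left_mono) auto
    thus ?thesis using yz by linarith
  qed
  have "(A - n) * (2*n+3+y) < w * (2*n+3+y)"
    by (rule mult_strict_right_mono) (use c y n in auto)
  hence "x^2 > (A - n) * (2*n+3+y)" using wy by simp
  hence "(A - n) * (2*n+3+y) * (n+3+B) < x^2 * (n+3+B)"
    by (rule mult_strict_right_mono) (use B0 n in linarith)
  hence h1: "x^2 * (n+3+B) > (A - n) * (2*n+3) * (n+3+B) + (A - n) * (y * (n+3+B))"
    by (simp add: algebra_simps)
  have "(A - n) * (y * (n+3+B)) \<ge> (A - n) * x^2" using yb An by (intro mult_left_mono) auto
  with h1 have "x^2 * (n+3+B) > (A - n) * (2*n+3) * (n+3+B) + (A - n) * x^2" by linarith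
  moreover have "x^2 = (A - n) * (A + n)" using A2 by (simp add: algebra_simps power2_eq_square)
  ultimately have "(A - n) * ((A + n) * (n+3+B)) > (A - n) * ((2*n+3) * (n+3+B) + (A - n) * (A + n))"
    by (simp add: algebra_simps)
  hence "(A + n) * (n+3+B) > (2*n+3) * (n+3+B) + (A - n) * (A + n)"
    using An by (simp add: mult_less_cancel_left)
  hence "(A - n - 3) * (n + 3 + B) > A^2 - n^2" by (simp add: algebra_simps power2_eq_square)
  with key show False by linarith
qed
lemma alg_A_base:
  fixes x n w y :: real
  assumes x: "x > 0" and n: "n \<ge> 0" and small: "x^2 \<le> 6*n+9"
    and w: "w > 0" and y: "y > 0" and wy: "w * (2*n+3+y) = x^2"
  shows "w \<le> sqrt (x^2 + n^2) - n"
proof -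
  define A where "A = sqrt (x^2 + n^2)"
  have A2: "A^2 = x^2 + n^2" unfolding A_def by simp
  have An: "A > n" unfolding A_def by (rule real_less_rsqrt) (use x in simp)
  have A3: "A \<le> n + 3"
  proof -
    have "A \<le> sqrt ((n+3)^2)" unfolding A_def
      by (rule real_sqrt_le_mono) (use small in \<open>simp add: power2_eq_square algebra_simps\<close>)
    thus ?thesis using n by simp
  qed
  have wy0: "w * y > 0" using w y by simp
  have "w * (2*n+3) \<le> x^2" using wy wy0 by (simp add: algebra_simps)
  also have "x^2 = (A - n) * (A + n)" using A2 by (simp add: algebra_simps power2_eq_square)
  also have "\<dots> \<le> (A - n) * (2*n+3)" using An A3 by (intro mult_left_mono) auto
  finally have "w * (2*n+3) \<le> (A - n) * (2*n+3)" .
  hence "w \<le> A - n" using n by (simp add: mult_le_cancel_right)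
  thus ?thesis unfolding A_def .
qed

lemma alg_B_step:
  fixes x m v :: real
  assumes x: "x > 0" and m: "m \<ge> 0" and v: "v > 0" and vb: "v \<le> m + 1 + sqrt (x^2 + (m+1)^2)"
  shows "x^2 / (x^2 / v + (2*m+3)) + (2*m+5) \<le> m + 3 + sqrt (x^2 + (m+3)^2)"
proof -
  define A where "A = sqrt (x^2 + (m+1)^2)"
  define B where "B = sqrt (x^2 + (m+3)^2)"
  have A2: "A^2 = x^2 + (m+1)^2" unfolding A_def by simp
  have B2: "B^2 = x^2 + (m+3)^2" unfolding B_def by simp
  have A0: "A \<ge> m + 1" unfolding A_def by (rule real_le_rsqrt) simp
  have B0: "B \<ge> 0" unfolding B_def by simp
  have BA2: "B \<le> A + 2"
  proof -
    have "B^2 \<le> (A+2)^2" using A2 B2 A0 m by (simp add: power2_eq_square algebra_simps)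
    thus ?thesis by (rule power2_le_imp_le) (use A0 m in linarith)
  qed
  have BA: "(B - A) * (B + A) = 4 * m + 8" using A2 B2 by (simp add: algebra_simps power2_eq_square)
  define D where "D = A + m + 2"
  have D0: "D > 0" unfolding D_def using A0 m by linarith
  have xA: "x^2 = (A - m - 1) * (A + m + 1)" using A2 by (simp add: algebra_simps power2_eq_square)
  have u: "x^2 / v + (2*m+3) \<ge> D"
  proof -
    have "x^2 / v \<ge> x^2 / (m + 1 + A)"
    proof (rule divide_left_mono)
      show "v \<le> m + 1 + A" using vb unfolding A_def .
      show "0 < (m + 1 + A) * v" using v A0 m by simp
    qed simp
    also have "x^2 / (m + 1 + A) = A - m - 1"
    proof -
      have nz: "A + m + 1 \<noteq> 0" using A0 m by linarith
      have "x^2 / (m + 1 + A) = (A - m - 1) * (A + m + 1) / (A + m + 1)"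
        unfolding xA by (simp add: add_ac)
      also have "\<dots> = A - m - 1" using nz by simp
      finally show ?thesis .
    qed
    finally show ?thesis unfolding D_def by linarith
  qed
  have "x^2 / (x^2 / v + (2*m+3)) \<le> x^2 / D"
    using u D0 by (intro divide_left_mono) (auto intro: mult_pos_pos)
  moreover have "x^2 / D + (m + 2) \<le> B"
  proof -
    have "(2*m+3) * (A + B) \<le> (2*m+3) * (2*A+2)" using BA2 m by (intro mult_left_mono) auto
    also have "\<dots> \<le> (4*m+8) * D" unfolding D_def using A0 m by (simp add: algebra_simps)
    finally have "(2*m+3) * (A + B) \<le> (4*m+8) * D" .
    hence "(2*m+3) * (A + B) \<le> (B - A) * (B + A) * D" using BA by simp
    hence "(2*m+3) * (A + B) \<le> ((B - A) * D) * (A + B)" by (simp add: algebra_simps)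
    hence "2*m+3 \<le> (B - A) * D" using A0 B0 m by (simp add: mult_le_cancel_right)
    moreover have "x^2 + (m+2) * D = A * D + (2*m+3)" unfolding D_def using A2
      by (simp add: algebra_simps power2_eq_square)
    ultimately have "x^2 + (m+2) * D \<le> B * D" by (simp add: algebra_simps)
    hence "(x^2 + (m+2) * D) / D \<le> B * D / D" using D0 by (intro divide_right_mono) auto
    moreover have "x^2 / D + (m+2) = (x^2 + (m+2) * D) / D" using D0 by (simp add: field_simps)
    ultimately show ?thesis using D0 by simp
  qed
  ultimately show ?thesis unfolding B_def by linarith
qed




lemma sph_i_pos: "x > 0 \<Longrightarrow> sph_i n x > 0"
  unfolding sph_i_def by (intro mult_pos_pos bessel_I_pos) auto

lemma sph_i_rec:
  assumes x: "x > 0"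
  shows "sph_i n x = (2 * real n + 3) / x * sph_i (n+1) x + sph_i (n+2) x"
proof -
  have r: "bessel_I (real n + 3/2 - 1) x = 2 * (real n + 3/2) / x * bessel_I (real n + 3/2) x + bessel_I (real n + 3/2 + 1) x"
    by (rule bessel_I_rec[OF x])
  have e1: "real n + 3/2 - 1 = real n + 1/2" and e2: "real (n+1) + 1/2 = real n + 3/2"
    and e3: "real (n+2) + 1/2 = real n + 3/2 + 1" and e4: "2 * (real n + 3/2) = 2 * real n + 3" by simp_all
  show ?thesis unfolding sph_i_def e2 e3 using r unfolding e1 e4 by (simp add: algebra_simps)
qed

lemma sph_k_rec:
  assumes x: "x > 0"
  shows "sph_k (n+2) x = sph_k n x + (2 * real n + 3) / x * sph_k (n+1) x"
proof -
  have r: "bessel_K (real n + 3/2 + 1) x = bessel_K (real n + 3/2 - 1) x + 2 * (real n + 3/2) / x * bessel_K (real n + 3/2) x"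
    by (rule bessel_K_rec[OF x])
  have e1: "real n + 3/2 - 1 = real n + 1/2" and e2: "real (n+1) + 1/2 = real n + 3/2"
    and e3: "real (n+2) + 1/2 = real n + 3/2 + 1" and e4: "2 * (real n + 3/2) = 2 * real n + 3" by simp_all
  show ?thesis unfolding sph_k_def e2 e3 using r unfolding e1 e4 by (simp add: algebra_simps)
qed

lemma sph_k1:
  assumes x: "x > 0"
  shows "sph_k 1 x = (1 + 1/x) * sph_k 0 x"
proof -
  have r: "bessel_K (1/2 + 1) x = bessel_K (1/2 - 1) x + 2 * (1/2) / x * bessel_K (1/2) x"
    by (rule bessel_K_rec[OF x])
  have e: "(1/2::real) - 1 = - (1/2)" by simp
  have r2: "bessel_K (1/2 + 1) x = (1 + 1/x) * bessel_K (1/2) x"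
    using r unfolding e bessel_K_even by (simp add: algebra_simps)
  have e2: "real (1::nat) + 1/2 = 1/2 + 1" by simp
  show ?thesis unfolding sph_k_def e2 r2 by simp
qed

lemma sph_k0_pos: "x > 0 \<Longrightarrow> sph_k 0 x > 0"
  unfolding sph_k_def using bessel_K_half_pos by (intro mult_pos_pos) auto

lemma sph_k_pos:
  assumes x: "x > 0"
  shows "sph_k n x > 0"
proof -
  have "sph_k n x > 0 \<and> sph_k (n+1) x > 0"
  proof (induction n)
    case 0
    have "1 + 1/x > 0" using x by (simp add: add_pos_pos)
    hence "sph_k 1 x > 0" unfolding sph_k1[OF x] using sph_k0_pos[OF x] by (intro mult_pos_pos) auto
    thus ?case using sph_k0_pos[OF x] by simp
  next
    case (Suc n)
    have "sph_k (n+2) x > 0" unfolding sph_k_rec[OF x]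
      using Suc x by (intro add_pos_nonneg mult_nonneg_nonneg) auto
    thus ?case using Suc by simp
  qed
  thus ?thesis by simp
qed

lemma ratio_i:
  assumes x: "x > 0"
  shows "(sph_i (n+1) x / sph_i n x) * (2 * real n + 3 + x * (sph_i (n+2) x / sph_i (n+1) x)) = x"
proof -
  have p0: "sph_i n x > 0" and p1: "sph_i (n+1) x > 0" using sph_i_pos[OF x] by auto
  have r: "sph_i n x = (2 * real n + 3) / x * sph_i (n+1) x + sph_i (n+2) x" by (rule sph_i_rec[OF x])
  have "(sph_i (n+1) x / sph_i n x) * (2 * real n + 3 + x * (sph_i (n+2) x / sph_i (n+1) x))
      = x * ((2 * real n + 3) / x * sph_i (n+1) x + sph_i (n+2) x) / sph_i n x"
    using p0 p1 x by (simp add: field_simps)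
  also have "\<dots> = x" unfolding r[symmetric] using p0 by simp
  finally show ?thesis .
qed

lemma bound_A:
  assumes x: "x > 0"
  shows "x * (sph_i (n+1) x / sph_i n x) \<le> sqrt (x^2 + (real n)^2) - real n"
proof -
  define r where "r k = sph_i (k+1) x / sph_i k x" for k
  have rpos: "r k > 0" for k unfolding r_def using sph_i_pos[OF x] by (simp add: divide_pos_pos)
  have rr: "(x * r k) * (2 * real k + 3 + x * r (k+1)) = x^2" for k
  proof -
    have h: "r k * (2 * real k + 3 + x * r (k+1)) = x" using ratio_i[OF x, of k] unfolding r_def by simp
    have "(x * r k) * (2 * real k + 3 + x * r (k+1)) = x * (r k * (2 * real k + 3 + x * r (k+1)))"
      by (simp only: mult.assoc)
    thus ?thesis unfolding h by (simp add: power2_eq_square)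
  qed
  define M where "M = nat (ceiling (x^2))"
  have "x * r n \<le> sqrt (x^2 + (real n)^2) - real n"
  proof (induction "M - n" arbitrary: n rule: less_induct)
    case less
    show ?case
    proof (cases "x^2 \<le> 6 * real n + 9")
      case True
      show ?thesis by (rule alg_A_base[OF x _ True _ _ rr]) (use rpos x in auto)
    next
      case False
      hence "real n < x^2" by linarith
      hence "n < M" unfolding M_def by linarith
      hence "M - (n+2) < M - n" by linarith
      hence ih: "x * r (n+2) \<le> sqrt (x^2 + (real (n+2))^2) - real (n+2)" by (rule less)
      have rr1: "(x * r (n+1)) * (2 * real n + 5 + x * r (n+2)) = x^2"
        using rr[of "n+1"] by (simp add: algebra_simps)
      show ?thesis
      proof (rule alg_A[OF x _ refl refl _ _ rr[of n] rr1])
        show "x * r (n+2) \<le> sqrt (x^2 + (real n + 2)^2) - real n - 2" using ih by (simp add: add.commute)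
      qed (use rpos x in auto)
    qed
  qed
  thus ?thesis unfolding r_def .
qed

lemma base_B1:
  fixes x :: real assumes x: "x > 0"
  shows "x^2 / (x + 1) + 3 \<le> 2 + sqrt (x^2 + 4)"
proof -
  have q: "x^2 / (x + 1) + 1 = (x^2 + x + 1) / (x + 1)" using x by (simp add: field_simps)
  have "(x^2 + x + 1) / (x + 1) \<le> sqrt (x^2 + 4)"
  proof (rule real_le_rsqrt)
    have "(x^2 + x + 1)^2 \<le> (x^2 + 4) * (x + 1)^2"
      using x by (simp add: power2_eq_square algebra_simps)
    thus "((x^2 + x + 1) / (x + 1))^2 \<le> x^2 + 4"
      using x by (simp add: power_divide divide_simps)
  qed
  thus ?thesis using q by linarith
qed

lemma ratio_k:
  assumes x: "x > 0"
  shows "x * (sph_k (m+2) x / sph_k (m+1) x) = x^2 / (x * (sph_k (m+1) x / sph_k m x)) + (2 * real m + 3)"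
proof -
  have p0: "sph_k m x > 0" and p1: "sph_k (m+1) x > 0" using sph_k_pos[OF x] by auto
  show ?thesis unfolding sph_k_rec[OF x] using p0 p1 x by (simp add: field_simps power2_eq_square)
qed

lemma bound_B:
  assumes x: "x > 0"
  shows "x * (sph_k (m+1) x / sph_k m x) \<le> real m + 1 + sqrt (x^2 + (real m + 1)^2)"
proof (induction m rule: less_induct)
  case (less m)
  define s where "s k = x * (sph_k (k+1) x / sph_k k x)" for k
  have spos: "s k > 0" for k unfolding s_def using sph_k_pos[OF x] x by (simp add: divide_pos_pos)
  have srec: "s (k+1) = x^2 / s k + (2 * real k + 3)" for k
    unfolding s_def using ratio_k[OF x, of k] by (simp add: add.assoc)
  have s0: "s 0 = x + 1" unfolding s_def using sph_k1[OF x] sph_k0_pos[OF x] x by (simp add: field_simps)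
  show ?case
  proof (cases m)
    case 0
    have "x \<le> sqrt (x^2 + 1)" by (rule real_le_rsqrt) simp
    thus ?thesis using s0 unfolding 0 s_def by simp
  next
    case (Suc p)
    show ?thesis
    proof (cases p)
      case 0
      have "s 1 = x^2 / (x + 1) + 3" using srec[of 0] s0 by simp
      thus ?thesis using base_B1[OF x] unfolding Suc 0 s_def by simp
    next
      case (Suc k)
      have mk: "m = k + 2" using \<open>m = Suc p\<close> Suc by simp
      have ih: "s k \<le> real k + 1 + sqrt (x^2 + (real k + 1)^2)"
        using less[of k] mk unfolding s_def by simp
      have "s (k+2) = x^2 / (x^2 / s k + (2 * real k + 3)) + (2 * real k + 5)"
        using srec[of "k+1"] srec[of k] by (simp add: algebra_simps)
      also have "\<dots> \<le> real k + 3 + sqrt (x^2 + (real k + 3)^2)"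
        by (rule alg_B_step[OF x _ spos ih]) simp
      finally show ?thesis unfolding mk s_def by (simp add: add_ac)
    qed
  qed
qed

theorem lemma3:
  fixes n :: nat and x :: real
  assumes "x > 0"
  shows "2 * real n / x + sph_i (n + 1) x / sph_i n x - sph_k (n + 1) x / sph_k n x < 0"
proof -
  note x = assms
  define r where "r = sph_i (n + 1) x / sph_i n x"
  define s where "s = sph_k (n + 1) x / sph_k n x"
  have A: "x * r \<le> sqrt (x^2 + (real n)^2) - real n" unfolding r_def by (rule bound_A[OF x])
  have key: "x * r \<le> x * s - (2 * real n + 1)"
  proof (cases n)
    case 0
    have "sqrt (x^2) = x" using x by simp
    hence "x * r \<le> x" using A 0 by simp
    moreover have "x * s = x + 1" unfolding s_def 0 using sph_k1[OF x] sph_k0_pos[OF x] x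
      by (simp add: field_simps)
    ultimately show ?thesis using 0 by simp
  next
    case (Suc p)
    define X where "X = sqrt (x^2 + (real n)^2)"
    have Xn: "X > real n" unfolding X_def by (rule real_less_rsqrt) (use x in simp)
    have X2: "X^2 = x^2 + (real n)^2" unfolding X_def by simp
    define v where "v = x * (sph_k (p+1) x / sph_k p x)"
    have vpos: "v > 0" unfolding v_def using sph_k_pos[OF x] x by (simp add: divide_pos_pos)
    have B: "v \<le> real n + X" unfolding v_def X_def Suc using bound_B[OF x, of p] by (simp add: add_ac)
    have xs: "x * s = x^2 / v + (2 * real n + 1)"
      unfolding s_def v_def Suc using ratio_k[OF x, of p] by (simp add: add_ac)
    have "X - real n = x^2 / (real n + X)"
    proof -
      have "(X - real n) * (real n + X) = x^2" using X2 by (simp add: algebra_simps power2_eq_square)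
      moreover have "real n + X > 0" using Xn by linarith
      ultimately show ?thesis by (simp add: field_simps)
    qed
    also have "\<dots> \<le> x^2 / v" using B vpos by (intro divide_left_mono) auto
    finally have "x * r \<le> x^2 / v" using A unfolding X_def by linarith
    thus ?thesis using xs by linarith
  qed
  have "x * (2 * real n / x + r - s) = 2 * real n + x * r - x * s" using x by (simp add: algebra_simps)
  also have "\<dots> < 0" using key by linarith
  finally have "x * (2 * real n / x + r - s) < 0" .
  hence "2 * real n / x + r - s < 0" using x by (simp add: mult_less_0_iff)
  thus ?thesis unfolding r_def s_def .
qed

end
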